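(* Fix $x_0$, $\tau\in(0,1)$, $v\in B(0,\rho_{\max})$. There exist a finite set $\mathcal{L}_{T+1}'$ of sequences of non-negative integers of length $T$ and finite positive constants $\beta_{T+1}'^{(j_1,\dots,j_T)}(x_0)$, not depending on $\epsilon$, the control or the observations, such that for every nominal control $u\in U$ left continuous at $\tau$ (with nominal trajectory $x$), every $(y_1,\dots,y_T)$ and every $\epsilon\in[0,\tau]$, $$|h(x^\epsilon(T))-h(x(T))|\le\epsilon\sum_{(j_1,\dots,j_T)\in\mathcal{L}_{T+1}'}\beta_{T+1}'^{(j_1,\dots,j_T)}(x_0)\prod_{m=1}^{T}\|y_m\|_2^{j_m}.$$
   Context: Fix positive integers $T,m,n_x,n_y$ and $\rho_{\max}\in(0,\infty)$; $B(0,\rho_{\max})$ is the closed Euclidean ball of radius $\rho_{\max}$ in $\mathbb{R}^m$; $U$ is the set of piecewise continuous $u:[0,T]\to\mathbb{R}^m$ with $\|u(t)\|_2\le\rho_{\max}$ for all $t$. $f:\mathbb{R}^{n_x}\times\mathbb{R}^m\to\mathbb{R}^{n_x}$ is continuously differentiable and there is $K_1\in[1,\infty)$ with $\|f(x',u')-f(x'',u'')\|_2\le K_1(\|x'-x''\|_2+\|u'-u''\|_2)$ for all $x',x''$ and $u',u''\in B(0,\rho_{\max})$. $g:\mathbb{R}^{n_x}\times\mathbb{R}^{n_y}\to\mathbb{R}^{n_x}$ is continuous and differentiable in its first argument, and there are $K_2,\dots,K_5\ge0$ and positive integers $L_1,L_2$ such that for all $x,y$ both $\|g(x,y)\|_2$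 and $\|\frac{\partial}{\partial x}g(x,y)\|_2$ are at most $K_2+K_3\|x\|_2^{L_1}+K_4\|y\|_2^{L_2}+K_5\|x\|_2^{L_1}\|y\|_2^{L_2}$. For a control $w\in U$ the hybrid trajectory from $x_0$ is: $x_1$ on $[0,1]$ solves $\dot x_1=f(x_1,w)$, $x_1(0)=x_0$; for $i=2,\dots,T$, $x_i$ on $[i-1,i]$ solves $\dot x_i=f(x_i,w)$ with $x_i(i-1)=g(x_{i-1}(i-1),y_{i-1})$; and the final state is $x(T)=g(x_T(T),y_T)$. Perturbed control: for $\epsilon\in[0,\tau]$, $u^\epsilon(t)=v$ if $t\in(\tau-\epsilon,\tau]$ and $u^\epsilon(t)=u(t)$ otherwise; $x^\epsilon$ is the trajectory under $u^\epsilon$ and $x=x^0$. $h:\mathbb{R}^{n_x}\to\mathbb{R}$ is differentiable and there are $K_6,K_7\ge0$ and a positive integer $L_3$ with $|h(x)|,\|\frac{\partial}{\partial x}h(x)\|_2\le K_6+K_7\|x\|_2^{L_3}$ for all $x$. *)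

theory Defs
  imports "HOL-Analysis.Analysis"
begin

definition piecewise_continuous_on :: "real \<Rightarrow> real \<Rightarrow> (real \<Rightarrow> 'a::real_normed_vector) \<Rightarrow> bool" where
  "piecewise_continuous_on a b u \<longleftrightarrow>
     (\<exists>S. finite S \<and> continuous_on ({a..b} - S) u \<and>
        (\<forall>s\<in>S. (a < s \<longrightarrow> (\<exists>l. (u \<longlongrightarrow> l) (at_left s))) \<and>
                (s < b \<longrightarrow> (\<exists>l. (u \<longlongrightarrow> l) (at_right s)))))"

definition admissible_controls :: "nat \<Rightarrow> real \<Rightarrow> (real \<Rightarrow> 'u::real_normed_vector) set" where
  "admissible_controls T \<rho>max =
     {u. piecewise_continuous_on 0 (real T) u \<and> (\<forall>t\<in>{0..real T}. norm (u t) \<le> \<rho>max)}"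

text \<open>Hybrid trajectory: X i is the i-th segment on [i-1,i], solving
  x' = f(x,w) in the (integral / Caratheodory) sense, with resets through g.\<close>
definition hybrid_traj ::
  "('x::euclidean_space \<times> 'u::euclidean_space \<Rightarrow> 'x) \<Rightarrow> ('x \<Rightarrow> 'y \<Rightarrow> 'x) \<Rightarrow> nat \<Rightarrow>
   (real \<Rightarrow> 'u) \<Rightarrow> 'x \<Rightarrow> (nat \<Rightarrow> 'y) \<Rightarrow> (nat \<Rightarrow> real \<Rightarrow> 'x) \<Rightarrow> bool" where
  "hybrid_traj f g T w x0 y X \<longleftrightarrow>
     X 1 0 = x0 \<and>
     (\<forall>i\<in>{2..T}. X i (real i - 1) = g (X (i - 1) (real i - 1)) (y (i - 1))) \<and>
     (\<forall>i\<in>{1..T}. \<forall>t\<in>{real i - 1..real i}.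
        ((\<lambda>s. f (X i s, w s)) has_integral (X i t - X i (real i - 1))) {real i - 1..t})"

definition hybrid_final :: "('x \<Rightarrow> 'y \<Rightarrow> 'x) \<Rightarrow> nat \<Rightarrow> (nat \<Rightarrow> 'y) \<Rightarrow> (nat \<Rightarrow> real \<Rightarrow> 'x) \<Rightarrow> 'x" where
  "hybrid_final g T y X = g (X T (real T)) (y T)"

definition needle :: "(real \<Rightarrow> 'u) \<Rightarrow> real \<Rightarrow> 'u \<Rightarrow> real \<Rightarrow> real \<Rightarrow> 'u" where
  "needle u \<tau> v \<epsilon> t = (if t \<in> {\<tau> - \<epsilon><..\<tau>} then v else u t)"

end

theory Submission
  imports Defs
begin

lemma gronwall_simple:
  fixes \<psi> :: "real \<Rightarrow> real"
  assumes ab: "a \<le> b" and cont: "continuous_on {a..b} \<psi>" and K: "0 \<le> K"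
    and le: "\<forall>t\<in>{a..b}. \<psi> t \<le> c + K * integral {a..t} \<psi>"
    and t: "t \<in> {a..b}"
  shows "\<psi> t \<le> c * exp (K * (t - a))"
proof -
  define H where "H s = (c + K * integral {a..s} \<psi>) * exp (- K * (s - a))" for s
  have at: "a \<le> t" using t by auto
  have contt: "continuous_on {a..t} \<psi>" using cont t by (auto intro: continuous_on_subset)
  have der: "(H has_derivative (\<lambda>h. ((K * \<psi> x) * exp (- K * (x - a)) + (c + K * integral {a..x} \<psi>) * (exp (- K * (x - a)) * (- K))) * h))
        (at x within {a..t})" if "a \<le> x" "x \<le> t" for x
  proof -
    have d1: "((\<lambda>u. integral {a..u} \<psi>) has_real_derivative \<psi> x) (at x within {a..t})"
      using integral_has_vector_derivative[OF contt, of x] that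
      by (simp add: has_real_derivative_iff_has_vector_derivative)
    have d2: "((\<lambda>s. exp (- K * (s - a))) has_real_derivative (exp (- K * (x - a)) * (- K))) (at x within {a..t})"
      by (auto intro!: derivative_eq_intros)
    have "(H has_real_derivative
        ((K * \<psi> x) * exp (- K * (x - a)) + (c + K * integral {a..x} \<psi>) * (exp (- K * (x - a)) * (- K)))) (at x within {a..t})"
      unfolding H_def by (rule derivative_eq_intros d1 d2 refl | simp)+
    then show ?thesis unfolding has_field_derivative_def by simp
  qed
  from mvt_very_simple[OF at der] obtain x where x: "x \<in> {a..t}"
    and eq: "H t - H a = ((K * \<psi> x) * exp (- K * (x - a)) + (c + K * integral {a..x} \<psi>) * (exp (- K * (x - a)) * (- K))) * (t - a)"
    by auto
  have "\<psi> x \<le> c + K * integral {a..x} \<psi>" using le x t by auto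
  then have "K * \<psi> x \<le> K * (c + K * integral {a..x} \<psi>)" using K by (rule mult_left_mono)
  then have "(K * \<psi> x) * exp (- K * (x - a)) \<le> K * (c + K * integral {a..x} \<psi>) * exp (- K * (x - a))"
    by (rule mult_right_mono) simp
  then have "(K * \<psi> x) * exp (- K * (x - a)) + (c + K * integral {a..x} \<psi>) * (exp (- K * (x - a)) * (- K)) \<le> 0"
    by (simp add: algebra_simps)
  then have "H t - H a \<le> 0" unfolding eq using at by (intro mult_nonpos_nonneg) auto
  moreover have "H a = c" by (simp add: H_def)
  ultimately have "(c + K * integral {a..t} \<psi>) * exp (- K * (t - a)) \<le> c" by (simp add: H_def)
  then have "(c + K * integral {a..t} \<psi>) * exp (- K * (t - a)) * exp (K * (t - a)) \<le> c * exp (K * (t - a))"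
    by (rule mult_right_mono) simp
  then have "c + K * integral {a..t} \<psi> \<le> c * exp (K * (t - a))"
    by (simp add: mult.assoc flip: exp_add)
  then show ?thesis using le t by force
qed

lemma gronwall_core:
  fixes G :: "real \<Rightarrow> 'a::euclidean_space" and \<psi> \<delta> :: "real \<Rightarrow> real"
  assumes ab: "a \<le> b" and cont: "continuous_on {a..b} \<psi>" and Gi: "G integrable_on {a..b}"
    and di: "\<delta> integrable_on {a..b}" and dnn: "\<forall>s\<in>{a..b}. 0 \<le> \<delta> s"
    and dD: "integral {a..b} \<delta> \<le> \<Delta>" and K: "0 \<le> K"
    and Gb: "\<forall>s\<in>{a..b}. norm (G s) \<le> \<delta> s + K * \<psi> s"
    and psi: "\<forall>t\<in>{a..b}. \<psi> t \<le> \<psi>0 + norm (integral {a..t} G)"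
    and t: "t \<in> {a..b}"
  shows "\<psi> t \<le> (\<psi>0 + \<Delta>) * exp (K * (t - a))"
proof (rule gronwall_simple[OF ab cont K _ t], intro ballI)
  fix s assume s: "s \<in> {a..b}"
  have sub: "{a..s} \<subseteq> {a..b}" using s by auto
  have pi: "\<psi> integrable_on {a..s}"
    using cont sub by (meson continuous_on_subset integrable_continuous_real)
  have dis: "\<delta> integrable_on {a..s}" using di sub integrable_on_subinterval by blast
  have Gis: "G integrable_on {a..s}" using Gi sub integrable_on_subinterval by blast
  have "norm (integral {a..s} G) \<le> integral {a..s} (\<lambda>x. \<delta> x + K * \<psi> x)"
    using Gis dis pi Gb sub by (intro integral_norm_bound_integral) (auto intro!: integrable_add integrable_on_mult_right)
  also have "\<dots> = integral {a..s} \<delta> + K * integral {a..s} \<psi>"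
    using dis pi by (simp add: integral_add integrable_on_mult_right integral_mult_right)
  also have "integral {a..s} \<delta> \<le> integral {a..b} \<delta>"
    using sub dis di dnn by (intro integral_subset_le) auto
  finally have "norm (integral {a..s} G) \<le> \<Delta> + K * integral {a..s} \<psi>" using dD by linarith
  then show "\<psi> s \<le> \<psi>0 + \<Delta> + K * integral {a..s} \<psi>" using psi s by force
qed

lemma seg_facts:
  fixes F :: "real \<Rightarrow> 'a::euclidean_space"
  assumes eq: "\<forall>t\<in>{a..b}. (F has_integral (X t - X a)) {a..t}" and ab: "a \<le> b"
  shows "F integrable_on {a..b}" "\<forall>t\<in>{a..b}. X t = X a + integral {a..t} F" "continuous_on {a..b} X"
proof -
  show Fi: "F integrable_on {a..b}" using eq ab by auto
  show X: "\<forall>t\<in>{a..b}. X t = X a + integral {a..t} F"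
    using eq by (auto dest!: integral_unique)
  have "continuous_on {a..b} (\<lambda>t. X a + integral {a..t} F)"
    by (intro continuous_intros indefinite_integral_continuous_1 Fi)
  then show "continuous_on {a..b} X"
  proof (rule continuous_on_eq)
    fix x assume "x \<in> {a..b}"
    then have "X x = X a + integral {a..x} F" using X by blast
    then show "X a + integral {a..x} F = X x" by (rule sym)
  qed
qed

lemma seg_norm:
  fixes f :: "'x::euclidean_space \<times> 'u::euclidean_space \<Rightarrow> 'x" and X :: "real \<Rightarrow> 'x"
  assumes f_lip: "\<forall>x1 x2 u1 u2. u1 \<in> cball 0 \<rho> \<longrightarrow> u2 \<in> cball 0 \<rho> \<longrightarrow>
                 norm (f (x1, u1) - f (x2, u2)) \<le> K1 * (norm (x1 - x2) + norm (u1 - u2))"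
    and K1: "0 \<le> K1"
    and eq: "\<forall>t\<in>{a..a+1}. ((\<lambda>s. f (X s, w s)) has_integral (X t - X a)) {a..t}"
    and w: "\<forall>s\<in>{a..a+1}. norm (w s) \<le> \<rho>"
    and t: "t \<in> {a..a+1}"
  shows "norm (X t) \<le> (norm (X a) + (norm (f (0,0)) + K1 * \<rho>)) * exp K1"
proof -
  have ab: "a \<le> a + 1" by simp
  note sf = seg_facts[OF eq ab]
  have "norm (w a) \<le> \<rho>" using w by simp
  then have rho: "0 \<le> \<rho>" using norm_ge_zero[of "w a"] by linarith
  define c0 where "c0 = norm (f (0,0)) + K1 * \<rho>"
  have c0: "0 \<le> c0" using rho K1 by (simp add: c0_def)
  have "norm (X t) \<le> (norm (X a) + c0) * exp (K1 * (t - a))"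
  proof (rule gronwall_core[where G = "\<lambda>s. f (X s, w s)" and \<delta> = "\<lambda>_. c0"])
    show "continuous_on {a..a+1} (\<lambda>t. norm (X t))" using sf(3) by (intro continuous_intros)
    show "(\<lambda>s. f (X s, w s)) integrable_on {a..a+1}" by (rule sf(1))
    show "(\<lambda>_. c0) integrable_on {a..a+1}" by (rule integrable_continuous_real) simp
    show "\<forall>s\<in>{a..a+1}. 0 \<le> c0" using c0 by simp
    show "integral {a..a+1} (\<lambda>_. c0) \<le> c0" by simp
    show "\<forall>s\<in>{a..a+1}. norm (f (X s, w s)) \<le> c0 + K1 * norm (X s)"
    proof
      fix s assume s: "s \<in> {a..a+1}"
      have "norm (f (X s, w s) - f (0, 0)) \<le> K1 * (norm (X s - 0) + norm (w s - 0))"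
        using f_lip[rule_format, of "w s" 0 "X s" 0] w s rho by simp
      also have "\<dots> \<le> K1 * norm (X s) + K1 * \<rho>" using w s K1 by (simp add: algebra_simps mult_left_mono)
      moreover have "norm (f (X s, w s)) \<le> norm (f (0,0)) + norm (f (X s, w s) - f (0, 0))"
        by (rule norm_triangle_sub)
      ultimately show "norm (f (X s, w s)) \<le> c0 + K1 * norm (X s)" unfolding c0_def
        by linarith
    qed
    show "\<forall>t\<in>{a..a+1}. norm (X t) \<le> norm (X a) + norm (integral {a..t} (\<lambda>s. f (X s, w s)))"
      using sf(2) by (metis norm_triangle_ineq)
  qed (use K1 t in simp_all)
  also have "\<dots> \<le> (norm (X a) + c0) * exp K1"
    using t K1 c0 by (intro mult_left_mono) (auto simp: mult_left_le)
  finally show ?thesis unfolding c0_def .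
qed

lemma seg_diff:
  fixes f :: "'x::euclidean_space \<times> 'u::euclidean_space \<Rightarrow> 'x" and X Z :: "real \<Rightarrow> 'x"
  assumes f_lip: "\<forall>x1 x2 u1 u2. u1 \<in> cball 0 \<rho> \<longrightarrow> u2 \<in> cball 0 \<rho> \<longrightarrow>
                 norm (f (x1, u1) - f (x2, u2)) \<le> K1 * (norm (x1 - x2) + norm (u1 - u2))"
    and K1: "0 \<le> K1"
    and eqX: "\<forall>t\<in>{a..a+1}. ((\<lambda>s. f (X s, w s)) has_integral (X t - X a)) {a..t}"
    and eqZ: "\<forall>t\<in>{a..a+1}. ((\<lambda>s. f (Z s, z s)) has_integral (Z t - Z a)) {a..t}"
    and w: "\<forall>s\<in>{a..a+1}. norm (w s) \<le> \<rho>"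
    and z: "\<forall>s\<in>{a..a+1}. norm (z s) \<le> \<rho>"
    and di: "\<delta> integrable_on {a..a+1}" and dnn: "\<forall>s\<in>{a..a+1}. 0 \<le> \<delta> s"
    and dD: "integral {a..a+1} \<delta> \<le> \<Delta>"
    and wz: "\<forall>s\<in>{a..a+1}. K1 * norm (w s - z s) \<le> \<delta> s"
    and t: "t \<in> {a..a+1}"
  shows "norm (X t - Z t) \<le> (norm (X a - Z a) + \<Delta>) * exp K1"
proof -
  have ab: "a \<le> a + 1" by simp
  note sX = seg_facts[OF eqX ab] and sZ = seg_facts[OF eqZ ab]
  have D: "0 \<le> \<Delta>" using integral_nonneg[OF di] dnn dD by force
  have "norm (X t - Z t) \<le> (norm (X a - Z a) + \<Delta>) * exp (K1 * (t - a))"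
  proof (rule gronwall_core[where G = "\<lambda>s. f (X s, w s) - f (Z s, z s)" and \<delta> = \<delta>])
    show "continuous_on {a..a+1} (\<lambda>t. norm (X t - Z t))" using sX(3) sZ(3) by (intro continuous_intros)
    show "(\<lambda>s. f (X s, w s) - f (Z s, z s)) integrable_on {a..a+1}" by (intro integrable_diff sX(1) sZ(1))
    show "\<forall>s\<in>{a..a+1}. norm (f (X s, w s) - f (Z s, z s)) \<le> \<delta> s + K1 * norm (X s - Z s)"
    proof
      fix s assume s: "s \<in> {a..a+1}"
      have "norm (f (X s, w s) - f (Z s, z s)) \<le> K1 * (norm (X s - Z s) + norm (w s - z s))"
        using f_lip w z s by auto
      then show "norm (f (X s, w s) - f (Z s, z s)) \<le> \<delta> s + K1 * norm (X s - Z s)"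
        using wz s by (simp add: algebra_simps) (smt (verit) atLeastAtMost_iff)
    qed
    show "\<forall>t\<in>{a..a+1}. norm (X t - Z t) \<le> norm (X a - Z a) + norm (integral {a..t} (\<lambda>s. f (X s, w s) - f (Z s, z s)))"
    proof
      fix t assume t: "t \<in> {a..a+1}"
      have sub: "{a..t} \<subseteq> {a..a+1}" using t by auto
      have "integral {a..t} (\<lambda>s. f (X s, w s) - f (Z s, z s)) = integral {a..t} (\<lambda>s. f (X s, w s)) - integral {a..t} (\<lambda>s. f (Z s, z s))"
        using sX(1) sZ(1) sub by (intro integral_diff) (auto intro: integrable_on_subinterval)
      then have "X t - Z t = (X a - Z a) + integral {a..t} (\<lambda>s. f (X s, w s) - f (Z s, z s))"
      proof -
        have e1: "X t = X a + integral {a..t} (\<lambda>s. f (X s, w s))" using sX(2) t by blast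
        have e2: "Z t = Z a + integral {a..t} (\<lambda>s. f (Z s, z s))" using sX(2) sZ(2) t by blast
        show ?thesis unfolding \<open>integral {a..t} (\<lambda>s. f (X s, w s) - f (Z s, z s)) = _\<close>
          by (subst e1, subst e2) (simp add: algebra_simps)
      qed
      then show "norm (X t - Z t) \<le> norm (X a - Z a) + norm (integral {a..t} (\<lambda>s. f (X s, w s) - f (Z s, z s)))"
        by (metis norm_triangle_ineq)
    qed
  qed (use K1 t di dnn dD in simp_all)
  also have "\<dots> \<le> (norm (X a - Z a) + \<Delta>) * exp K1"
    using t K1 D by (intro mult_left_mono) (auto simp: mult_left_le)
  finally show ?thesis .
qed


lemma lip_ball:
  fixes F :: "'a::real_normed_vector \<Rightarrow> 'b::real_normed_vector" and DF :: "'a \<Rightarrow> 'a \<Rightarrow>\<^sub>L 'b"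
  assumes d: "\<forall>x. (F has_derivative blinfun_apply (DF x)) (at x)"
    and b: "\<forall>x. norm x \<le> R \<longrightarrow> norm (DF x) \<le> M"
    and p: "norm p \<le> R" and q: "norm q \<le> R"
  shows "norm (F p - F q) \<le> M * norm (p - q)"
proof (rule differentiable_bound[where S = "cball 0 R" and f' = "\<lambda>x. blinfun_apply (DF x)"])
  show "convex (cball (0::'a) R)" by simp
  show "(F has_derivative blinfun_apply (DF x)) (at x within cball 0 R)" for x
    using d has_derivative_at_withinI by blast
  show "onorm (blinfun_apply (DF x)) \<le> M" if "x \<in> cball 0 R" for x
    using b that by (simp add: norm_blinfun.rep_eq)
qed (use p q in auto)

lemma poly_le:
  fixes Y a b A :: real
  assumes Y: "1 \<le> Y" and a: "0 \<le> a" "a \<le> A * Y ^ D" and b: "0 \<le> b" "b \<le> Y"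
    and K: "0 \<le> K2" "0 \<le> K3" "0 \<le> K4" "0 \<le> K5"
  shows "K2 + K3 * a ^ L1 + K4 * b ^ L2 + K5 * a ^ L1 * b ^ L2
         \<le> (K2 + K3 * A ^ L1 + K4 + K5 * A ^ L1) * Y ^ (D * L1 + L2)"
proof -
  have Yp: "0 < Y" using Y by simp
  have YD: "0 < Y ^ D" using Yp by simp
  have A: "0 \<le> A"
  proof (rule ccontr)
    assume "\<not> 0 \<le> A"
    then have "A * Y ^ D < 0" using YD by (simp add: mult_neg_pos)
    then show False using a by linarith
  qed
  have aL: "a ^ L1 \<le> A ^ L1 * Y ^ (D * L1)"
    using power_mono[OF a(2) a(1), of L1] by (simp add: power_mult_distrib power_mult)
  have bL: "b ^ L2 \<le> Y ^ L2" using power_mono[OF b(2) b(1)] .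
  let ?E = "Y ^ (D * L1 + L2)"
  have e1: "1 \<le> ?E" using Y by simp
  have e2: "Y ^ (D * L1) \<le> ?E" by (rule power_increasing) (use Y in auto)
  have e3: "Y ^ L2 \<le> ?E" by (rule power_increasing) (use Y in auto)
  have e4: "Y ^ (D * L1) * Y ^ L2 = ?E" by (simp add: power_add)
  have t1: "K2 \<le> K2 * ?E" using K e1 by (simp add: mult_le_cancel_left1)
  have t2: "K3 * a ^ L1 \<le> K3 * A ^ L1 * ?E"
  proof -
    have "K3 * a ^ L1 \<le> K3 * (A ^ L1 * Y ^ (D * L1))" using aL K by (intro mult_left_mono) auto
    also have "\<dots> \<le> K3 * (A ^ L1 * ?E)" using e2 K A by (intro mult_left_mono) auto
    finally show ?thesis by (simp add: mult.assoc)
  qed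
  have t3: "K4 * b ^ L2 \<le> K4 * ?E" using bL e3 K by (intro mult_left_mono) auto
  have t4: "K5 * a ^ L1 * b ^ L2 \<le> K5 * A ^ L1 * ?E"
  proof -
    have "a ^ L1 * b ^ L2 \<le> (A ^ L1 * Y ^ (D * L1)) * Y ^ L2"
      using aL bL a b A Yp by (intro mult_mono) auto
    also have "\<dots> = A ^ L1 * ?E" using e4 by (simp add: mult.assoc)
    finally show ?thesis using K by (simp add: mult.assoc mult_left_mono)
  qed
  show ?thesis using t1 t2 t3 t4 by (simp add: algebra_simps)
qed

lemma hpoly_le:
  fixes Y a A :: real
  assumes Y: "1 \<le> Y" and a: "0 \<le> a" "a \<le> A * Y ^ D" and K: "0 \<le> K6" "0 \<le> K7"
  shows "K6 + K7 * a ^ L3 \<le> (K6 + K7 * A ^ L3) * Y ^ (D * L3)"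
proof -
  have aL: "a ^ L3 \<le> A ^ L3 * Y ^ (D * L3)"
    using power_mono[OF a(2) a(1), of L3] by (simp add: power_mult_distrib power_mult)
  have e1: "1 \<le> Y ^ (D * L3)" using Y by simp
  have "K6 \<le> K6 * Y ^ (D * L3)" using K e1 by (simp add: mult_le_cancel_left1)
  moreover have "K7 * a ^ L3 \<le> K7 * (A ^ L3 * Y ^ (D * L3))" using aL K by (intro mult_left_mono) auto
  ultimately show ?thesis by (simp add: algebra_simps)
qed

lemma prod_to_sum:
  fixes y :: "nat \<Rightarrow> 'y::real_normed_vector" and C :: real
  assumes C: "0 \<le> C"
  shows "C * (\<Prod>m\<in>{1..T}. max 1 (norm (y m))) ^ DF
    \<le> (\<Sum>j\<in>{xs. set xs \<subseteq> {0, DF} \<and> length xs = T}. (C + 1) * (\<Prod>m\<in>{1..T}. norm (y m) ^ (j ! (m - 1))))"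
proof -
  define js where "js = map (\<lambda>k. if 1 \<le> norm (y (Suc k)) then DF else 0) [0..<T]"
  have js: "js \<in> {xs. set xs \<subseteq> {0, DF} \<and> length xs = T}" by (auto simp: js_def)
  have "(\<Prod>m\<in>{1..T}. max 1 (norm (y m))) ^ DF = (\<Prod>m\<in>{1..T}. max 1 (norm (y m)) ^ DF)"
    by (simp add: prod_power_distrib)
  also have "\<dots> = (\<Prod>m\<in>{1..T}. norm (y m) ^ (js ! (m - 1)))"
  proof (rule prod.cong[OF refl])
    fix m assume m: "m \<in> {1..T}"
    then have "js ! (m - 1) = (if 1 \<le> norm (y m) then DF else 0)" by (auto simp: js_def)
    then show "max 1 (norm (y m)) ^ DF = norm (y m) ^ (js ! (m - 1))" by (simp add: max_def)
  qed
  finally have eq: "(\<Prod>m\<in>{1..T}. max 1 (norm (y m))) ^ DF = (\<Prod>m\<in>{1..T}. norm (y m) ^ (js ! (m - 1)))" .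
  have nn: "0 \<le> (\<Prod>m\<in>{1..T}. max 1 (norm (y m))) ^ DF" by (simp add: prod_nonneg)
  have "C * (\<Prod>m\<in>{1..T}. max 1 (norm (y m))) ^ DF \<le> (C + 1) * (\<Prod>m\<in>{1..T}. max 1 (norm (y m))) ^ DF"
    using nn by (simp add: mult_right_mono)
  also have "\<dots> = (C + 1) * (\<Prod>m\<in>{1..T}. norm (y m) ^ (js ! (m - 1)))" using eq by simp
  also have "\<dots> \<le> (\<Sum>j\<in>{xs. set xs \<subseteq> {0, DF} \<and> length xs = T}. (C + 1) * (\<Prod>m\<in>{1..T}. norm (y m) ^ (j ! (m - 1))))"
    by (rule member_le_sum[OF js]) (use C in \<open>auto intro!: prod_nonneg mult_nonneg_nonneg finite_lists_length_eq\<close>)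
  finally show ?thesis .
qed


theorem proposition13:
  fixes f :: "'x::euclidean_space \<times> 'u::euclidean_space \<Rightarrow> 'x"
    and f' :: "'x \<times> 'u \<Rightarrow> ('x \<times> 'u) \<Rightarrow>\<^sub>L 'x"
    and g :: "'x \<Rightarrow> 'y::euclidean_space \<Rightarrow> 'x"
    and Dg :: "'x \<Rightarrow> 'y \<Rightarrow> 'x \<Rightarrow>\<^sub>L 'x"
    and h :: "'x \<Rightarrow> real"
    and Dh :: "'x \<Rightarrow> 'x \<Rightarrow>\<^sub>L real"
    and T L1 L2 L3 :: nat
    and \<rho>max K1 K2 K3 K4 K5 K6 K7 \<tau> :: real
    and x0 :: 'x and v :: 'u
  assumes T_pos: "T \<ge> 1"
    and rho_pos: "0 < \<rho>max"
    and f_C1: "\<forall>p. (f has_derivative blinfun_apply (f' p)) (at p)" "continuous_on UNIV f'"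
    and K1: "1 \<le> K1"
    and f_lip: "\<forall>x1 x2 u1 u2. u1 \<in> cball 0 \<rho>max \<longrightarrow> u2 \<in> cball 0 \<rho>max \<longrightarrow>
                 norm (f (x1, u1) - f (x2, u2)) \<le> K1 * (norm (x1 - x2) + norm (u1 - u2))"
    and g_cont: "continuous_on UNIV (\<lambda>(x, y). g x y)"
    and g_diff: "\<forall>x y. ((\<lambda>z. g z y) has_derivative blinfun_apply (Dg x y)) (at x)"
    and K25: "0 \<le> K2" "0 \<le> K3" "0 \<le> K4" "0 \<le> K5"
    and L12: "1 \<le> L1" "1 \<le> L2"
    and g_bound: "\<forall>x y. norm (g x y) \<le> K2 + K3 * norm x ^ L1 + K4 * norm y ^ L2 + K5 * norm x ^ L1 * norm y ^ L2"
    and Dg_bound: "\<forall>x y. norm (Dg x y) \<le> K2 + K3 * norm x ^ L1 + K4 * norm y ^ L2 + K5 * norm x ^ L1 * norm y ^ L2"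
    and h_diff: "\<forall>x. (h has_derivative blinfun_apply (Dh x)) (at x)"
    and K67: "0 \<le> K6" "0 \<le> K7"
    and L3: "1 \<le> L3"
    and h_bound: "\<forall>x. \<bar>h x\<bar> \<le> K6 + K7 * norm x ^ L3"
    and Dh_bound: "\<forall>x. norm (Dh x) \<le> K6 + K7 * norm x ^ L3"
    and tau: "0 < \<tau>" "\<tau> < 1"
    and v: "v \<in> cball 0 \<rho>max"
  shows "\<exists>(\<L> :: nat list set) (\<beta> :: nat list \<Rightarrow> real).
           finite \<L> \<and> (\<forall>j\<in>\<L>. length j = T) \<and> (\<forall>j\<in>\<L>. 0 < \<beta> j) \<and>
           (\<forall>u \<in> admissible_controls T \<rho>max. continuous (at_left \<tau>) u \<longrightarrow>
             (\<forall>(y :: nat \<Rightarrow> 'y) \<epsilon> X Xe. \<epsilon> \<in> {0..\<tau>} \<longrightarrow>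
                hybrid_traj f g T u x0 y X \<longrightarrow>
                hybrid_traj f g T (needle u \<tau> v \<epsilon>) x0 y Xe \<longrightarrow>
                \<bar>h (hybrid_final g T y Xe) - h (hybrid_final g T y X)\<bar>
                  \<le> \<epsilon> * (\<Sum>j\<in>\<L>. \<beta> j * (\<Prod>m\<in>{1..T}. norm (y m) ^ (j ! (m - 1))))))"
proof -
  define c0 where "c0 = norm (f (0,0)) + K1 * \<rho>max"
  define E where "E = exp K1"
  define Yf where "Yf y = (\<Prod>m\<in>{1..T}. max 1 (norm (y m)))" for y :: "nat \<Rightarrow> 'y"
  have K1nn: "0 \<le> K1" using K1 by simp
  have c0: "0 \<le> c0" using rho_pos K1nn by (simp add: c0_def)
  have E1: "1 \<le> E" using K1nn by (simp add: E_def)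
  have E0: "0 \<le> E" using E1 by simp
  have Y1: "1 \<le> Yf y" for y by (simp add: Yf_def prod_ge_1)
  have yY: "norm (y m) \<le> Yf y" if "m \<in> {1..T}" for y m
  proof -
    have eq: "Yf y = max 1 (norm (y m)) * (\<Prod>k\<in>{1..T}-{m}. max 1 (norm (y k)))"
      unfolding Yf_def using that by (simp add: prod.remove)
    have Q: "1 \<le> (\<Prod>k\<in>{1..T}-{m}. max 1 (norm (y k)))" by (simp add: prod_ge_1)
    have "max 1 (norm (y m)) * 1 \<le> max 1 (norm (y m)) * (\<Prod>k\<in>{1..T}-{m}. max 1 (norm (y k)))"
      by (rule mult_left_mono[OF Q]) simp
    then show ?thesis using eq by simp
  qed
  have uB: "norm (u s) \<le> \<rho>max" if "u \<in> admissible_controls T \<rho>max" "s \<in> {0..real T}" for u :: "real \<Rightarrow> 'u" and s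
    using that by (auto simp: admissible_controls_def)
  have nB: "norm (needle u \<tau> v \<epsilon> s) \<le> \<rho>max" if "u \<in> admissible_controls T \<rho>max" "s \<in> {0..real T}" for u :: "real \<Rightarrow> 'u" and s \<epsilon>
    using uB[OF that] v by (auto simp: needle_def)
  have nEq: "needle u \<tau> v \<epsilon> s = u s" if "1 \<le> s" for u :: "real \<Rightarrow> 'u" and s \<epsilon>
    using that tau by (auto simp: needle_def)
  have seg_eq: "\<forall>t\<in>{real i - 1..real i - 1 + 1}. ((\<lambda>s. f (Z i s, w s)) has_integral (Z i t - Z i (real i - 1))) {real i - 1..t}"
    if "hybrid_traj f g T w x0 y Z" "1 \<le> i" "i \<le> T" for w y Z i
    using that by (simp add: hybrid_traj_def)
  have claim: "i \<le> T \<Longrightarrow> \<exists>A B D. 0 \<le> A \<and> 0 \<le> B \<and> (\<forall>u y \<epsilon> X Xe. u \<in> admissible_controls T \<rho>max \<longrightarrow> \<epsilon> \<in> {0..\<tau>} \<longrightarrow>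
      hybrid_traj f g T u x0 y X \<longrightarrow> hybrid_traj f g T (needle u \<tau> v \<epsilon>) x0 y Xe \<longrightarrow>
      (\<forall>t\<in>{real i - 1..real i}. norm (X i t) \<le> A * Yf y ^ D \<and> norm (Xe i t) \<le> A * Yf y ^ D \<and>
          norm (Xe i t - X i t) \<le> \<epsilon> * B * Yf y ^ D))" if "1 \<le> i" for i
    using that
  proof (induct i rule: nat_induct_at_least)
    case base
    have "\<forall>u y \<epsilon> X Xe. u \<in> admissible_controls T \<rho>max \<longrightarrow> \<epsilon> \<in> {0..\<tau>} \<longrightarrow>
      hybrid_traj f g T u x0 y X \<longrightarrow> hybrid_traj f g T (needle u \<tau> v \<epsilon>) x0 y Xe \<longrightarrow>
      (\<forall>t\<in>{real 1 - 1..real 1}. norm (X 1 t) \<le> ((norm x0 + c0) * E) * Yf y ^ 0 \<and> norm (Xe 1 t) \<le> ((norm x0 + c0) * E) * Yf y ^ 0 \<and>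
          norm (Xe 1 t - X 1 t) \<le> \<epsilon> * (2 * K1 * \<rho>max * E) * Yf y ^ 0)"
    proof (intro allI impI ballI)
      fix u y \<epsilon> X Xe t
      assume u: "u \<in> admissible_controls T \<rho>max" and ep: "\<epsilon> \<in> {0..\<tau>}"
        and HX: "hybrid_traj f g T u x0 y X" and HXe: "hybrid_traj f g T (needle u \<tau> v \<epsilon>) x0 y Xe"
        and t: "t \<in> {real 1 - 1..real 1}"
      have t': "t \<in> {0..0+1}" using t by simp
      have X0: "X 1 0 = x0" "Xe 1 0 = x0" using HX HXe by (simp_all add: hybrid_traj_def)
      have eqX: "\<forall>t\<in>{0..0+1}. ((\<lambda>s. f (X 1 s, u s)) has_integral (X 1 t - X 1 0)) {0..t}"
        using seg_eq[OF HX, of 1] T_pos by simp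
      have eqXe: "\<forall>t\<in>{0..0+1}. ((\<lambda>s. f (Xe 1 s, needle u \<tau> v \<epsilon> s)) has_integral (Xe 1 t - Xe 1 0)) {0..t}"
        using seg_eq[OF HXe, of 1] T_pos by simp
      have uB1: "\<forall>s\<in>{0..0+1}. norm (u s) \<le> \<rho>max" using uB[OF u] T_pos by auto
      have nB1: "\<forall>s\<in>{0..0+1}. norm (needle u \<tau> v \<epsilon> s) \<le> \<rho>max" using nB[OF u] T_pos by auto
      have n1: "norm (X 1 t) \<le> (norm (X 1 0) + (norm (f (0,0)) + K1 * \<rho>max)) * exp K1"
        by (rule seg_norm[OF f_lip K1nn eqX uB1 t'])
      have n2: "norm (Xe 1 t) \<le> (norm (Xe 1 0) + (norm (f (0,0)) + K1 * \<rho>max)) * exp K1"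
        by (rule seg_norm[OF f_lip K1nn eqXe nB1 t'])
      define \<delta> where "\<delta> s = (if s \<in> {\<tau> - \<epsilon>..\<tau>} then 2 * K1 * \<rho>max else 0)" for s
      have hi: "(\<delta> has_integral (\<epsilon> * (2 * K1 * \<rho>max))) {0..0+1}"
      proof -
        have h0: "((\<lambda>s. 2 * K1 * \<rho>max) has_integral (measure lborel {\<tau> - \<epsilon>..\<tau>} *\<^sub>R (2 * K1 * \<rho>max))) {\<tau> - \<epsilon>..\<tau>}"
          by (rule has_integral_const_real)
        have m: "measure lborel {\<tau> - \<epsilon>..\<tau>} = \<epsilon>" using ep by simp
        have ie: "{\<tau> - \<epsilon>..\<tau>} \<inter> {0..0+1} = {\<tau> - \<epsilon>..\<tau>}" using ep tau by auto
        have h1: "((\<lambda>s. 2 * K1 * \<rho>max) has_integral (\<epsilon> * (2 * K1 * \<rho>max))) ({\<tau> - \<epsilon>..\<tau>} \<inter> {0..0+1})"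
          using h0 unfolding m ie by simp
        show ?thesis unfolding \<delta>_def by (subst has_integral_restrict_Int) (rule h1)
      qed
      have di: "\<delta> integrable_on {0..0+1}" using hi by blast
      have dI: "integral {0..0+1} \<delta> \<le> \<epsilon> * (2 * K1 * \<rho>max)" using hi by (simp add: integral_unique)
      have dnn: "\<forall>s\<in>{0..0+1}. 0 \<le> \<delta> s" using K1nn rho_pos by (simp add: \<delta>_def)
      have wz: "\<forall>s\<in>{0..0+1}. K1 * norm (needle u \<tau> v \<epsilon> s - u s) \<le> \<delta> s"
      proof
        fix s :: real assume s: "s \<in> {0..0+1}"
        show "K1 * norm (needle u \<tau> v \<epsilon> s - u s) \<le> \<delta> s"
        proof (cases "s \<in> {\<tau> - \<epsilon><..\<tau>}")
          case True
          have "norm (v - u s) \<le> norm v + norm (u s)" by (rule norm_triangle_ineq4)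
          also have "\<dots> \<le> 2 * \<rho>max"
          proof -
            have "norm (u s) \<le> \<rho>max" using uB1 s by blast
            then show ?thesis using v by simp
          qed
          finally have "K1 * norm (v - u s) \<le> K1 * (2 * \<rho>max)" using K1nn by (rule mult_left_mono)
          then show ?thesis using True by (simp add: needle_def \<delta>_def)
        next
          case False
          then have "needle u \<tau> v \<epsilon> s = u s" unfolding needle_def by (simp only: if_False)
          moreover have "0 \<le> \<delta> s" using dnn s by blast
          ultimately show ?thesis by simp
        qed
      qed
      have d1: "norm (Xe 1 t - X 1 t) \<le> (norm (Xe 1 0 - X 1 0) + \<epsilon> * (2 * K1 * \<rho>max)) * exp K1"
        by (rule seg_diff[OF f_lip K1nn eqXe eqX nB1 uB1 di dnn dI wz t'])
      show "norm (X 1 t) \<le> ((norm x0 + c0) * E) * Yf y ^ 0 \<and> norm (Xe 1 t) \<le> ((norm x0 + c0) * E) * Yf y ^ 0 \<and>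
          norm (Xe 1 t - X 1 t) \<le> \<epsilon> * (2 * K1 * \<rho>max * E) * Yf y ^ 0"
        using n1 n2 d1 X0 by (simp add: c0_def E_def mult.assoc)
    qed
    moreover have "0 \<le> (norm x0 + c0) * E" using c0 E0 by simp
    moreover have "0 \<le> 2 * K1 * \<rho>max * E" using K1nn rho_pos E0 by simp
    ultimately show ?case by blast
  next
    case (Suc n)
    from Suc obtain A B D where A: "0 \<le> A" and B: "0 \<le> B" and H: "\<forall>u y \<epsilon> X Xe. u \<in> admissible_controls T \<rho>max \<longrightarrow> \<epsilon> \<in> {0..\<tau>} \<longrightarrow>
      hybrid_traj f g T u x0 y X \<longrightarrow> hybrid_traj f g T (needle u \<tau> v \<epsilon>) x0 y Xe \<longrightarrow>
      (\<forall>t\<in>{real n - 1..real n}. norm (X n t) \<le> A * Yf y ^ D \<and> norm (Xe n t) \<le> A * Yf y ^ D \<and>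
          norm (Xe n t - X n t) \<le> \<epsilon> * B * Yf y ^ D)" by auto
    define P where "P = K2 + K3 * A ^ L1 + K4 + K5 * A ^ L1"
    define D' where "D' = D * L1 + L2"
    have P: "0 \<le> P" using K25 A by (simp add: P_def)
    have "\<forall>u y \<epsilon> X Xe. u \<in> admissible_controls T \<rho>max \<longrightarrow> \<epsilon> \<in> {0..\<tau>} \<longrightarrow>
      hybrid_traj f g T u x0 y X \<longrightarrow> hybrid_traj f g T (needle u \<tau> v \<epsilon>) x0 y Xe \<longrightarrow>
      (\<forall>t\<in>{real (Suc n) - 1..real (Suc n)}. norm (X (Suc n) t) \<le> ((P + c0) * E) * Yf y ^ (D' + D) \<and>
          norm (Xe (Suc n) t) \<le> ((P + c0) * E) * Yf y ^ (D' + D) \<and>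
          norm (Xe (Suc n) t - X (Suc n) t) \<le> \<epsilon> * (P * B * E) * Yf y ^ (D' + D))"
    proof (intro allI impI ballI)
      fix u y \<epsilon> X Xe t
      assume u: "u \<in> admissible_controls T \<rho>max" and ep: "\<epsilon> \<in> {0..\<tau>}"
        and HX: "hybrid_traj f g T u x0 y X" and HXe: "hybrid_traj f g T (needle u \<tau> v \<epsilon>) x0 y Xe"
        and t: "t \<in> {real (Suc n) - 1..real (Suc n)}"
      define Y where "Y = Yf y"
      have Y: "1 \<le> Y" using Y1 by (simp add: Y_def)
      have t': "t \<in> {real n..real n + 1}" using t by simp
      have Hn: "\<forall>t\<in>{real n - 1..real n}. norm (X n t) \<le> A * Y ^ D \<and> norm (Xe n t) \<le> A * Y ^ D \<and>
          norm (Xe n t - X n t) \<le> \<epsilon> * B * Y ^ D" using H u ep HX HXe by (simp add: Y_def)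
      have nn: "real n \<in> {real n - 1..real n}" by simp
      have Xn: "norm (X n (real n)) \<le> A * Y ^ D" and Xen: "norm (Xe n (real n)) \<le> A * Y ^ D"
        and dn: "norm (Xe n (real n) - X n (real n)) \<le> \<epsilon> * B * Y ^ D" using Hn nn by blast+
      have S2: "Suc n \<in> {2..T}" using Suc.prems Suc.hyps by simp
      have "\<forall>i\<in>{2..T}. X i (real i - 1) = g (X (i - 1) (real i - 1)) (y (i - 1))"
        using HX by (simp add: hybrid_traj_def)
      then have "X (Suc n) (real (Suc n) - 1) = g (X (Suc n - 1) (real (Suc n) - 1)) (y (Suc n - 1))"
        using S2 by blast
      then have rX: "X (Suc n) (real n) = g (X n (real n)) (y n)" by simp
      have "\<forall>i\<in>{2..T}. Xe i (real i - 1) = g (Xe (i - 1) (real i - 1)) (y (i - 1))"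
        using HXe by (simp add: hybrid_traj_def)
      then have "Xe (Suc n) (real (Suc n) - 1) = g (Xe (Suc n - 1) (real (Suc n) - 1)) (y (Suc n - 1))"
        using S2 by blast
      then have rXe: "Xe (Suc n) (real n) = g (Xe n (real n)) (y n)" by simp
      have yn: "norm (y n) \<le> Y" using yY[of n y] Suc.prems Suc.hyps by (simp add: Y_def)
      have gbx: "norm (g p (y n)) \<le> P * Y ^ D'" if p: "norm p \<le> A * Y ^ D" for p
      proof -
        have "norm (g p (y n)) \<le> K2 + K3 * norm p ^ L1 + K4 * norm (y n) ^ L2 + K5 * norm p ^ L1 * norm (y n) ^ L2"
          using g_bound by blast
        also have "\<dots> \<le> P * Y ^ D'" unfolding P_def D'_def
          by (rule poly_le[OF Y norm_ge_zero p norm_ge_zero yn K25])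
        finally show ?thesis .
      qed
      have gX: "norm (X (Suc n) (real n)) \<le> P * Y ^ D'" using gbx[OF Xn] rX by simp
      have gXe: "norm (Xe (Suc n) (real n)) \<le> P * Y ^ D'" using gbx[OF Xen] rXe by simp
      have gd0: "norm (g (Xe n (real n)) (y n) - g (X n (real n)) (y n)) \<le> (P * Y ^ D') * norm (Xe n (real n) - X n (real n))"
      proof (rule lip_ball[where DF = "\<lambda>x. Dg x (y n)" and R = "A * Y ^ D"])
        show "\<forall>x. ((\<lambda>z. g z (y n)) has_derivative blinfun_apply (Dg x (y n))) (at x)" using g_diff by blast
        show "\<forall>x. norm x \<le> A * Y ^ D \<longrightarrow> norm (Dg x (y n)) \<le> P * Y ^ D'"
        proof (intro allI impI)
          fix x :: 'x assume x: "norm x \<le> A * Y ^ D"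
          have "norm (Dg x (y n)) \<le> K2 + K3 * norm x ^ L1 + K4 * norm (y n) ^ L2 + K5 * norm x ^ L1 * norm (y n) ^ L2"
            using Dg_bound by blast
          also have "\<dots> \<le> P * Y ^ D'" unfolding P_def D'_def
            by (rule poly_le[OF Y norm_ge_zero x norm_ge_zero yn K25])
          finally show "norm (Dg x (y n)) \<le> P * Y ^ D'" .
        qed
      qed (use Xn Xen in auto)
      have gd: "norm (Xe (Suc n) (real n) - X (Suc n) (real n)) \<le> (P * Y ^ D') * (\<epsilon> * B * Y ^ D)"
      proof -
        have PY: "0 \<le> P * Y ^ D'" using P Y by simp
        have "(P * Y ^ D') * norm (Xe n (real n) - X n (real n)) \<le> (P * Y ^ D') * (\<epsilon> * B * Y ^ D)"
          by (rule mult_left_mono[OF dn PY])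
        then show ?thesis using gd0 rX rXe by simp
      qed
      have eqX: "\<forall>t\<in>{real n..real n + 1}. ((\<lambda>s. f (X (Suc n) s, u s)) has_integral (X (Suc n) t - X (Suc n) (real n))) {real n..t}"
        using seg_eq[OF HX, of "Suc n"] Suc.prems by simp
      have eqXe: "\<forall>t\<in>{real n..real n + 1}. ((\<lambda>s. f (Xe (Suc n) s, needle u \<tau> v \<epsilon> s)) has_integral (Xe (Suc n) t - Xe (Suc n) (real n))) {real n..t}"
        using seg_eq[OF HXe, of "Suc n"] Suc.prems by simp
      have uBn: "\<forall>s\<in>{real n..real n + 1}. norm (u s) \<le> \<rho>max" using uB[OF u] Suc.prems by auto
      have nBn: "\<forall>s\<in>{real n..real n + 1}. norm (needle u \<tau> v \<epsilon> s) \<le> \<rho>max" using nB[OF u] Suc.prems by auto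
      have n1: "norm (X (Suc n) t) \<le> (norm (X (Suc n) (real n)) + (norm (f (0,0)) + K1 * \<rho>max)) * exp K1"
        by (rule seg_norm[OF f_lip K1nn eqX uBn t'])
      have n2: "norm (Xe (Suc n) t) \<le> (norm (Xe (Suc n) (real n)) + (norm (f (0,0)) + K1 * \<rho>max)) * exp K1"
        by (rule seg_norm[OF f_lip K1nn eqXe nBn t'])
      have wz: "\<forall>s\<in>{real n..real n + 1}. K1 * norm (needle u \<tau> v \<epsilon> s - u s) \<le> 0"
        using nEq Suc.hyps by auto
      have d1: "norm (Xe (Suc n) t - X (Suc n) t) \<le> (norm (Xe (Suc n) (real n) - X (Suc n) (real n)) + 0) * exp K1"
        by (rule seg_diff[OF f_lip K1nn eqXe eqX nBn uBn _ _ _ wz t']) auto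
      have YD: "Y ^ D' \<le> Y ^ (D' + D)" by (rule power_increasing) (use Y in auto)
      have YD1: "1 \<le> Y ^ (D' + D)" using Y by simp
      have "(norm (X (Suc n) (real n)) + c0) * E \<le> (P * Y ^ D' + c0) * E"
        using gX E0 by (intro mult_right_mono) auto
      then have "norm (X (Suc n) t) \<le> (P * Y ^ D' + c0) * E"
        using n1 unfolding c0_def E_def by linarith
      also have "\<dots> \<le> (P + c0) * E * Y ^ (D' + D)"
      proof -
        have "P * Y ^ D' + c0 \<le> (P + c0) * Y ^ (D' + D)"
          using mult_left_mono[OF YD P] mult_left_mono[OF YD1 c0] by (simp add: algebra_simps)
        then show ?thesis using mult_right_mono[OF _ E0] by (metis mult.assoc mult.commute)
      qed
      finally have r1: "norm (X (Suc n) t) \<le> (P + c0) * E * Y ^ (D' + D)" .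
      have "(norm (Xe (Suc n) (real n)) + c0) * E \<le> (P * Y ^ D' + c0) * E"
        using gXe E0 by (intro mult_right_mono) auto
      then have "norm (Xe (Suc n) t) \<le> (P * Y ^ D' + c0) * E"
        using n2 unfolding c0_def E_def by linarith
      also have "\<dots> \<le> (P + c0) * E * Y ^ (D' + D)"
      proof -
        have "P * Y ^ D' + c0 \<le> (P + c0) * Y ^ (D' + D)"
          using mult_left_mono[OF YD P] mult_left_mono[OF YD1 c0] by (simp add: algebra_simps)
        then show ?thesis using mult_right_mono[OF _ E0] by (metis mult.assoc mult.commute)
      qed
      finally have r2: "norm (Xe (Suc n) t) \<le> (P + c0) * E * Y ^ (D' + D)" .
      have "norm (Xe (Suc n) t - X (Suc n) t) \<le> ((P * Y ^ D') * (\<epsilon> * B * Y ^ D)) * E"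
        using d1 gd E0 unfolding E_def by (simp add: mult_right_mono order_trans)
      also have "\<dots> = \<epsilon> * (P * B * E) * Y ^ (D' + D)" by (simp add: power_add algebra_simps)
      finally have r3: "norm (Xe (Suc n) t - X (Suc n) t) \<le> \<epsilon> * (P * B * E) * Y ^ (D' + D)" .
      show "norm (X (Suc n) t) \<le> ((P + c0) * E) * Yf y ^ (D' + D) \<and>
          norm (Xe (Suc n) t) \<le> ((P + c0) * E) * Yf y ^ (D' + D) \<and>
          norm (Xe (Suc n) t - X (Suc n) t) \<le> \<epsilon> * (P * B * E) * Yf y ^ (D' + D)"
        using r1 r2 r3 by (simp add: Y_def)
    qed
    moreover have "0 \<le> (P + c0) * E" using P c0 E0 by simp
    moreover have "0 \<le> P * B * E" using P B E0 by simp
    ultimately show ?case by blast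
  qed
  obtain A B D where A: "0 \<le> A" and B: "0 \<le> B" and H: "\<forall>u y \<epsilon> X Xe. u \<in> admissible_controls T \<rho>max \<longrightarrow> \<epsilon> \<in> {0..\<tau>} \<longrightarrow>
      hybrid_traj f g T u x0 y X \<longrightarrow> hybrid_traj f g T (needle u \<tau> v \<epsilon>) x0 y Xe \<longrightarrow>
      (\<forall>t\<in>{real T - 1..real T}. norm (X T t) \<le> A * Yf y ^ D \<and> norm (Xe T t) \<le> A * Yf y ^ D \<and>
          norm (Xe T t - X T t) \<le> \<epsilon> * B * Yf y ^ D)"
    using claim[OF T_pos order_refl] by blast
  define P where "P = K2 + K3 * A ^ L1 + K4 + K5 * A ^ L1"
  define D' where "D' = D * L1 + L2"
  have P: "0 \<le> P" using K25 A by (simp add: P_def)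
  define C where "C = (K6 + K7 * P ^ L3) * P * B"
  define DF where "DF = D' * L3 + D' + D"
  have C: "0 \<le> C" using K67 P B by (simp add: C_def)
  show ?thesis
  proof (intro exI[of _ "{xs. set xs \<subseteq> {0, DF} \<and> length xs = T}"] exI[of _ "\<lambda>_. C + 1"] conjI ballI allI impI)
    show "finite {xs. set xs \<subseteq> {0, DF} \<and> length xs = T}" by (rule finite_lists_length_eq) simp
    show "length j = T" if "j \<in> {xs. set xs \<subseteq> {0, DF} \<and> length xs = T}" for j using that by simp
    show "0 < C + 1" using C by simp
    fix u :: "real \<Rightarrow> 'u" and y :: "nat \<Rightarrow> 'y" and \<epsilon> X Xe
    assume u: "u \<in> admissible_controls T \<rho>max" and ep: "\<epsilon> \<in> {0..\<tau>}"
      and HX: "hybrid_traj f g T u x0 y X" and HXe: "hybrid_traj f g T (needle u \<tau> v \<epsilon>) x0 y Xe"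
    define Y where "Y = Yf y"
    have Y: "1 \<le> Y" using Y1 by (simp add: Y_def)
    have HT: "\<forall>t\<in>{real T - 1..real T}. norm (X T t) \<le> A * Y ^ D \<and> norm (Xe T t) \<le> A * Y ^ D \<and>
          norm (Xe T t - X T t) \<le> \<epsilon> * B * Y ^ D" using H u ep HX HXe by (simp add: Y_def)
    have TT: "real T \<in> {real T - 1..real T}" by simp
    have XT: "norm (X T (real T)) \<le> A * Y ^ D" and XeT: "norm (Xe T (real T)) \<le> A * Y ^ D"
      and dT: "norm (Xe T (real T) - X T (real T)) \<le> \<epsilon> * B * Y ^ D" using HT TT by blast+
    have yT: "norm (y T) \<le> Y" using yY[of T y] T_pos by (simp add: Y_def)
    have gbx: "norm (g p (y T)) \<le> P * Y ^ D'" if p: "norm p \<le> A * Y ^ D" for p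
    proof -
      have "norm (g p (y T)) \<le> K2 + K3 * norm p ^ L1 + K4 * norm (y T) ^ L2 + K5 * norm p ^ L1 * norm (y T) ^ L2"
        using g_bound by blast
      also have "\<dots> \<le> P * Y ^ D'" unfolding P_def D'_def
        by (rule poly_le[OF Y norm_ge_zero p norm_ge_zero yT K25])
      finally show ?thesis .
    qed
    have gd0: "norm (g (Xe T (real T)) (y T) - g (X T (real T)) (y T)) \<le> (P * Y ^ D') * norm (Xe T (real T) - X T (real T))"
    proof (rule lip_ball[where DF = "\<lambda>x. Dg x (y T)" and R = "A * Y ^ D"])
      show "\<forall>x. ((\<lambda>z. g z (y T)) has_derivative blinfun_apply (Dg x (y T))) (at x)" using g_diff by blast
      show "\<forall>x. norm x \<le> A * Y ^ D \<longrightarrow> norm (Dg x (y T)) \<le> P * Y ^ D'"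
      proof (intro allI impI)
        fix x :: 'x assume x: "norm x \<le> A * Y ^ D"
        have "norm (Dg x (y T)) \<le> K2 + K3 * norm x ^ L1 + K4 * norm (y T) ^ L2 + K5 * norm x ^ L1 * norm (y T) ^ L2"
          using Dg_bound by blast
        also have "\<dots> \<le> P * Y ^ D'" unfolding P_def D'_def
          by (rule poly_le[OF Y norm_ge_zero x norm_ge_zero yT K25])
        finally show "norm (Dg x (y T)) \<le> P * Y ^ D'" .
      qed
    qed (use XT XeT in auto)
    have PY: "0 \<le> P * Y ^ D'" using P Y by simp
    have gd: "norm (g (Xe T (real T)) (y T) - g (X T (real T)) (y T)) \<le> (P * Y ^ D') * (\<epsilon> * B * Y ^ D)"
      using gd0 mult_left_mono[OF dT PY] by linarith
    have hd: "norm (h (g (Xe T (real T)) (y T)) - h (g (X T (real T)) (y T)))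
        \<le> ((K6 + K7 * P ^ L3) * Y ^ (D' * L3)) * norm (g (Xe T (real T)) (y T) - g (X T (real T)) (y T))"
    proof (rule lip_ball[where DF = Dh and R = "P * Y ^ D'"])
      show "\<forall>x. (h has_derivative blinfun_apply (Dh x)) (at x)" using h_diff by blast
      show "\<forall>x. norm x \<le> P * Y ^ D' \<longrightarrow> norm (Dh x) \<le> (K6 + K7 * P ^ L3) * Y ^ (D' * L3)"
      proof (intro allI impI)
        fix x :: 'x assume x: "norm x \<le> P * Y ^ D'"
        have "norm (Dh x) \<le> K6 + K7 * norm x ^ L3" using Dh_bound by blast
        also have "\<dots> \<le> (K6 + K7 * P ^ L3) * Y ^ (D' * L3)"
          by (rule hpoly_le[OF Y norm_ge_zero x K67])
        finally show "norm (Dh x) \<le> (K6 + K7 * P ^ L3) * Y ^ (D' * L3)" .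
      qed
    qed (use gbx[OF XT] gbx[OF XeT] in auto)
    have HY: "0 \<le> (K6 + K7 * P ^ L3) * Y ^ (D' * L3)" using K67 P Y by simp
    have "\<bar>h (hybrid_final g T y Xe) - h (hybrid_final g T y X)\<bar>
        \<le> ((K6 + K7 * P ^ L3) * Y ^ (D' * L3)) * ((P * Y ^ D') * (\<epsilon> * B * Y ^ D))"
      using hd mult_left_mono[OF gd HY] unfolding hybrid_final_def real_norm_def by linarith
    also have "\<dots> = \<epsilon> * (C * Y ^ DF)" unfolding C_def DF_def by (simp add: power_add algebra_simps)
    also have "\<dots> \<le> \<epsilon> * (\<Sum>j\<in>{xs. set xs \<subseteq> {0, DF} \<and> length xs = T}. (C + 1) * (\<Prod>m\<in>{1..T}. norm (y m) ^ (j ! (m - 1))))"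
      using prod_to_sum[OF C, of y T DF] ep unfolding Y_def Yf_def by (intro mult_left_mono) auto
    finally show "\<bar>h (hybrid_final g T y Xe) - h (hybrid_final g T y X)\<bar>
        \<le> \<epsilon> * (\<Sum>j\<in>{xs. set xs \<subseteq> {0, DF} \<and> length xs = T}. (C + 1) * (\<Prod>m\<in>{1..T}. norm (y m) ^ (j ! (m - 1))))" .
  qed
qed

end
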